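(* Let $D,W,V,K$ be positive integers, $N:=W+VK$. Fix $\sharp\in\{\mathrm{st},\mathrm{m}\}$ and index pairs $\theta^{(\sharp)}(1),\dots,\theta^{(\sharp)}(J)$, lying in $\{1,\dots,W\}^{\times2}$ if $\sharp=\mathrm{st}$ and in $\{1,\dots,VK\}^{\times2}$ if $\sharp=\mathrm{m}$. For $P=(P_{\mathrm{st}}\,|\,P_{\mathrm{m}})\in\mathbb{R}^{D\times N}$ with $P_{\mathrm{st}}\in\mathbb{R}^{D\times W}$, let $\mathcal{D}:=P_{\mathrm{st}}^TP_{\mathrm{m}}\in\mathbb{R}^{W\times VK}$ and $\mathcal{M}(P):=\bigl(\mathrm{vec}(\mathcal{N}^{(\sharp)}_1)\,|\cdots|\,\mathrm{vec}(\mathcal{N}^{(\sharp)}_J)\bigr)$ with $$\mathcal{N}^{(\mathrm{st})}_j:=\tfrac12\Bigl(\bigl(\mathcal{D}_{\theta^{(\mathrm{st})}(j)_1,1:D}\bigr)^T\mathcal{D}_{\theta^{(\mathrm{st})}(j)_2,1:D}+\bigl(\mathcal{D}_{\theta^{(\mathrm{st})}(j)_2,1:D}\bigr)^T\mathcal{D}_{\theta^{(\mathrm{st})}(j)_1,1:D}\Bigr),$$ $$\mathcal{N}^{(\mathrm{m})}_j:=\tfrac12\Bigl(\mathcal{D}_{1:D,\theta^{(\mathrm{m})}(j)_1}\bigl(\mathcal{D}_{1:D,\theta^{(\mathrm{m})}(j)_2}\bigr)^T+\mathcal{D}_{1:D,\theta^{(\mathrm{m})}(j)_2}\bigl(\mathcal{D}_{1:D,\theta^{(\mathrm{m})}(j)_1}\bigr)^T\Bigr).$$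 Then either every $P\in\mathbb{R}^{D\times N}$ satisfies $\mathrm{rank}(\mathcal{M}(P))<D(D+1)/2$, or Lebesgue-almost all $P\in\mathbb{R}^{D\times N}$ satisfy $\mathrm{rank}(\mathcal{M}(P))=D(D+1)/2$.
   Context: $\mathcal{D}_{i,1:D}$ is the row vector of the first $D$ entries of row $i$ of $\mathcal{D}$; $\mathcal{D}_{1:D,l}$ is the column vector of the first $D$ entries of column $l$ of $\mathcal{D}$. $\theta(j)_1,\theta(j)_2$ are the two components of the index pair $\theta(j)$. $\mathrm{vec}(X)$ stacks the columns of $X$ into a single column vector. *)

theory Defs
  imports "HOL-Analysis.Analysis" "Jordan_Normal_Form.DL_Rank"
begin

text \<open>Conventions: all indices are 0-based.  A matrix P in R^(D x N) is an element
  of the extensional function space on the index set {..<D} x {..<N}; Lebesgue measure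
  on R^(D x N) is the product of lborel over that index set.\<close>

datatype sharp = St | Mm

definition Pst :: "nat \<Rightarrow> nat \<Rightarrow> (nat \<times> nat \<Rightarrow> real) \<Rightarrow> real mat" where
  "Pst D W P = mat D W (\<lambda>(i,j). P (i, j))"

definition Pm :: "nat \<Rightarrow> nat \<Rightarrow> nat \<Rightarrow> (nat \<times> nat \<Rightarrow> real) \<Rightarrow> real mat" where
  "Pm D W VK P = mat D VK (\<lambda>(i,j). P (i, W + j))"

definition Dmat :: "nat \<Rightarrow> nat \<Rightarrow> nat \<Rightarrow> (nat \<times> nat \<Rightarrow> real) \<Rightarrow> real mat" where
  "Dmat D W VK P = transpose_mat (Pst D W P) * Pm D W VK P"

definition Nmat :: "sharp \<Rightarrow> nat \<Rightarrow> real mat \<Rightarrow> nat \<times> nat \<Rightarrow> real mat" where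
  "Nmat s D Dm ab = (case s of
     St \<Rightarrow> mat D D (\<lambda>(r,c). (1/2) * (Dm $$ (fst ab, r) * Dm $$ (snd ab, c)
                                    + Dm $$ (snd ab, r) * Dm $$ (fst ab, c)))
   | Mm \<Rightarrow> mat D D (\<lambda>(r,c). (1/2) * (Dm $$ (r, fst ab) * Dm $$ (c, snd ab)
                                    + Dm $$ (r, snd ab) * Dm $$ (c, fst ab))))"

definition vecm :: "real mat \<Rightarrow> real vec" where
  "vecm X = vec (dim_row X * dim_col X) (\<lambda>k. X $$ (k mod dim_row X, k div dim_row X))"

definition Mmat :: "sharp \<Rightarrow> nat \<Rightarrow> nat \<Rightarrow> nat \<Rightarrow> nat \<Rightarrow> (nat \<Rightarrow> nat \<times> nat)
     \<Rightarrow> (nat \<times> nat \<Rightarrow> real) \<Rightarrow> real mat" where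
  "Mmat s D W VK J theta P =
     mat_of_cols (D * D) (map (\<lambda>j. vecm (Nmat s D (Dmat D W VK P) (theta j))) [0..<J])"

definition mrank :: "real mat \<Rightarrow> nat" where
  "mrank A = vec_space.rank (dim_row A) A"

end

theory Submission
  imports Defs "Jordan_Normal_Form.DL_Missing_Sublist"
begin


inductive polyfun :: "'i set \<Rightarrow> (('i \<Rightarrow> real) \<Rightarrow> real) \<Rightarrow> bool" for I where
  pf_const: "polyfun I (\<lambda>x. c)"
| pf_var: "i \<in> I \<Longrightarrow> polyfun I (\<lambda>x. x i)"
| pf_add: "polyfun I f \<Longrightarrow> polyfun I g \<Longrightarrow> polyfun I (\<lambda>x. f x + g x)"
| pf_mult: "polyfun I f \<Longrightarrow> polyfun I g \<Longrightarrow> polyfun I (\<lambda>x. f x * g x)"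

lemma polyfun_sum: "finite S \<Longrightarrow> (\<And>a. a \<in> S \<Longrightarrow> polyfun I (f a)) \<Longrightarrow> polyfun I (\<lambda>x. \<Sum>a\<in>S. f a x)"
  by (induction S rule: finite_induct) (auto intro: polyfun.intros)

lemma polyfun_prod: "finite S \<Longrightarrow> (\<And>a. a \<in> S \<Longrightarrow> polyfun I (f a)) \<Longrightarrow> polyfun I (\<lambda>x. \<Prod>a\<in>S. f a x)"
  by (induction S rule: finite_induct) (auto intro: polyfun.intros)

lemma polyfun_local: "polyfun I f \<Longrightarrow> (\<And>j. j \<in> I \<Longrightarrow> x j = y j) \<Longrightarrow> f x = f y"
  by (induction rule: polyfun.induct) auto

lemma polyfun_measurable:
  "polyfun I f \<Longrightarrow> I \<subseteq> J \<Longrightarrow> f \<in> borel_measurable (PiM J (\<lambda>_. lborel))"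
proof (induction rule: polyfun.induct)
  case (pf_var i) then show ?case by (auto intro: measurable_component_singleton)
qed auto

lemma polyfun_decomp:
  assumes "polyfun (insert i I) f"
  shows "\<exists>p. (\<forall>k. polyfun I (\<lambda>x. coeff (p x) k)) \<and> (\<forall>x. f x = poly (p x) (x i))"
  using assms
proof (induction rule: polyfun.induct)
  case (pf_const c)
  show ?case
    apply (rule exI[of _ "\<lambda>x. [:c:]"])
    by (auto simp: coeff_pCons split: nat.split intro: polyfun.intros)
next
  case (pf_var j)
  show ?case
  proof (cases "j = i")
    case True
    show ?thesis
      apply (rule exI[of _ "\<lambda>x. [:0,1:]"])
      using True by (auto simp: coeff_pCons split: nat.split intro: polyfun.intros)
  next
    case False
    then have "j \<in> I" using pf_var by auto
    have "polyfun I (\<lambda>x. coeff [:x j:] k)" for k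
      by (cases k) (auto intro: polyfun.intros \<open>j \<in> I\<close>)
    then show ?thesis
      by (intro exI[of _ "\<lambda>x. [:x j:]"]) auto
  qed
next
  case (pf_add f g)
  then obtain p q where p: "\<forall>k. polyfun I (\<lambda>x. coeff (p x) k)" "\<forall>x. f x = poly (p x) (x i)"
     and q: "\<forall>k. polyfun I (\<lambda>x. coeff (q x) k)" "\<forall>x. g x = poly (q x) (x i)" by blast
  show ?case
    apply (rule exI[of _ "\<lambda>x. p x + q x"])
    using p q by (auto intro: polyfun.intros)
next
  case (pf_mult f g)
  then obtain p q where p: "\<forall>k. polyfun I (\<lambda>x. coeff (p x) k)" "\<forall>x. f x = poly (p x) (x i)"
     and q: "\<forall>k. polyfun I (\<lambda>x. coeff (q x) k)" "\<forall>x. g x = poly (q x) (x i)" by blast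
  show ?case
    apply (rule exI[of _ "\<lambda>x. p x * q x"])
    using p q by (auto simp: coeff_mult intro!: polyfun_sum polyfun.intros)
qed

lemma polyfun_AE_nonzero:
  fixes I :: "'i set"
  assumes "finite I" "polyfun I f" "x0 \<in> PiE I (\<lambda>_. UNIV)" "f x0 \<noteq> 0"
  shows "AE x in PiM I (\<lambda>_. lborel). f x \<noteq> 0"
  using assms
proof (induction I arbitrary: f x0 rule: finite_induct)
  case empty
  have "f x \<noteq> 0" for x using polyfun_local[OF empty(1), of x x0] empty(3) by auto
  then show ?case by simp
next
  case (insert i I)
  interpret product_sigma_finite "\<lambda>_::'i. lborel::real measure" by standard
  interpret I: finite_product_sigma_finite "\<lambda>_::'i. lborel::real measure" I by standard (rule insert(1))
  interpret J: finite_product_sigma_finite "\<lambda>_::'i. lborel::real measure" "{i}" by standard simp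
  interpret pair_sigma_finite "PiM I (\<lambda>_. lborel::real measure)" "PiM {i} (\<lambda>_. lborel::real measure)" by standard
  obtain p where p: "\<And>k. polyfun I (\<lambda>x. coeff (p x) k)" "\<And>x. f x = poly (p x) (x i)"
    using polyfun_decomp[OF insert(4)] by blast
  have "p x0 \<noteq> 0" using insert(6) p(2) by auto
  then obtain k where k: "coeff (p x0) k \<noteq> 0" using leading_coeff_neq_0 by blast
  have pk: "\<And>y z. (\<And>j. j \<in> I \<Longrightarrow> y j = z j) \<Longrightarrow> p y = p z"
    by (rule poly_eqI, rule polyfun_local[OF p(1)]) auto
  have "restrict x0 I \<in> PiE I (\<lambda>_. UNIV)" by auto
  moreover have "coeff (p (restrict x0 I)) k \<noteq> 0" using k pk[of "restrict x0 I" x0] by auto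
  ultimately have AE1: "AE y in PiM I (\<lambda>_. lborel). coeff (p y) k \<noteq> 0"
    using insert(3)[OF p(1)] by blast
  have AE2: "AE y in PiM I (\<lambda>_. lborel). AE z in PiM {i} (\<lambda>_. lborel). f (merge I {i} (y, z)) \<noteq> 0"
  proof (rule AE_mp[OF AE1], rule AE_I2, intro impI)
    fix y assume y: "y \<in> space (PiM I (\<lambda>_. lborel))" and cy: "coeff (p y) k \<noteq> 0"
    then have py: "p y \<noteq> 0" by auto
    define R where "R = {t. poly (p y) t = 0}"
    have R: "finite R" unfolding R_def using py by (rule poly_roots_finite)
    have Rnull: "R \<in> null_sets lborel" using R by (rule finite_imp_null_set_lborel)
    have "PiE {i} (\<lambda>_. R) \<in> null_sets (PiM {i} (\<lambda>_. lborel))"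
      using Rnull by (auto simp: null_sets_def emeasure_PiM intro!: sets_PiM_I_finite)
    moreover have "{z \<in> space (PiM {i} (\<lambda>_. lborel)). \<not> f (merge I {i} (y, z)) \<noteq> 0} \<subseteq> PiE {i} (\<lambda>_. R)"
    proof
      fix z assume zz: "z \<in> {z \<in> space (PiM {i} (\<lambda>_. lborel)). \<not> f (merge I {i} (y, z)) \<noteq> 0}"
      then have z: "z \<in> space (PiM {i} (\<lambda>_. lborel))" and fz: "f (merge I {i} (y, z)) = 0" by auto
      have e1: "p (merge I {i} (y, z)) = p y" by (rule pk) (use insert(2) in \<open>auto simp: merge_def\<close>)
      have e2: "merge I {i} (y, z) i = z i" using insert(2) by (auto simp: merge_def)
      have "poly (p y) (z i) = 0" using fz p(2)[of "merge I {i} (y, z)"] e1 e2 by simp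
      then have "z i \<in> R" by (simp add: R_def)
      then show "z \<in> PiE {i} (\<lambda>_. R)" using z by (auto simp: space_PiM PiE_iff)
    qed
    ultimately show "AE z in PiM {i} (\<lambda>_. lborel). f (merge I {i} (y, z)) \<noteq> 0"
      by (rule AE_I')
  qed
  have fm: "f \<in> borel_measurable (PiM (I \<union> {i}) (\<lambda>_. lborel))"
    using polyfun_measurable[OF insert(4)] by auto
  have AE3: "AE x in PiM I (\<lambda>_. lborel) \<Otimes>\<^sub>M PiM {i} (\<lambda>_. lborel). f (merge I {i} x) \<noteq> 0"
    by (rule AE_pair_measure[OF _ AE2[unfolded split_paired_all]]) (use fm in measurable)
  have AEd: "AE x in distr (PiM I (\<lambda>_. lborel) \<Otimes>\<^sub>M PiM {i} (\<lambda>_. lborel)) (PiM (I \<union> {i}) (\<lambda>_. lborel)) (merge I {i}). f x \<noteq> 0"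
    by (subst AE_distr_iff) (use AE3 fm in measurable)
  have dm: "distr (PiM I (\<lambda>_. lborel) \<Otimes>\<^sub>M PiM {i} (\<lambda>_. lborel)) (PiM (I \<union> {i}) (\<lambda>_. lborel)) (merge I {i})
     = PiM (I \<union> {i}) (\<lambda>_. lborel::real measure)"
    by (rule distr_merge) (use insert(1,2) in auto)
  have "AE x in PiM (I \<union> {i}) (\<lambda>_. lborel). f x \<noteq> 0" using AEd unfolding dm .
  then show ?case unfolding Un_insert_right Un_empty_right .
qed


lemma gram_entry:
  assumes A: "A \<in> carrier_mat n m" and "a < m" "b < m"
  shows "(transpose_mat A * A) $$ (a, b) = (\<Sum>k<n. A $$ (k, a) * A $$ (k, b))"
proof -
  have "(transpose_mat A * A) $$ (a, b) = scalar_prod (col A a) (col A b)" using assms by simp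
  also have "\<dots> = (\<Sum>k<n. A $$ (k, a) * A $$ (k, b))"
    unfolding scalar_prod_def using assms by (auto simp: lessThan_atLeast0 intro!: sum.cong)
  finally show ?thesis .
qed
lemma self_scalar_prod_zero_real:
  fixes w :: "real vec"
  assumes "scalar_prod w w = 0"
  shows "w = 0\<^sub>v (dim_vec w)"
proof (rule eq_vecI)
  have "(\<Sum>i\<in>{0..<dim_vec w}. w $ i * w $ i) = 0" using assms by (simp add: scalar_prod_def)
  then have "\<forall>i\<in>{0..<dim_vec w}. w $ i * w $ i = 0"
    by (subst sum_nonneg_eq_0_iff[symmetric]) auto
  then show "\<And>i. i < dim_vec (0\<^sub>v (dim_vec w)) \<Longrightarrow> w $ i = 0\<^sub>v (dim_vec w) $ i" by auto
qed auto

lemma gram_indep: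
  fixes xs :: "real vec list"
  assumes xs: "set xs \<subseteq> carrier_vec n" "distinct xs"
    and li: "\<not> module.lin_dep class_ring (module_vec TYPE(real) n) (set xs)"
  shows "det (transpose_mat (mat_of_cols n xs) * mat_of_cols n xs) \<noteq> 0"
proof
  let ?A = "mat_of_cols n xs"
  let ?m = "length xs"
  have A: "?A \<in> carrier_mat n ?m" by simp
  have G: "transpose_mat ?A * ?A \<in> carrier_mat ?m ?m" using A by (intro mult_carrier_mat) auto
  assume "det (transpose_mat ?A * ?A) = 0"
  then obtain v where v: "v \<in> carrier_vec ?m" "v \<noteq> 0\<^sub>v ?m" "(transpose_mat ?A * ?A) *\<^sub>v v = 0\<^sub>v ?m"
    using det_0_iff_vec_prod_zero_field[OF G] by blast
  have "(transpose_mat ?A * ?A) *\<^sub>v v = transpose_mat ?A *\<^sub>v (?A *\<^sub>v v)"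
    using A v(1) by (metis assoc_mult_mat_vec transpose_carrier_mat)
  then have "scalar_prod (transpose_mat ?A *\<^sub>v (?A *\<^sub>v v)) v = scalar_prod (0\<^sub>v ?m) v" using v(3) by simp
  then have "scalar_prod (transpose_mat ?A *\<^sub>v (?A *\<^sub>v v)) v = 0" using scalar_prod_left_zero[OF v(1)] by simp
  moreover have "scalar_prod (transpose_mat ?A *\<^sub>v (?A *\<^sub>v v)) v = scalar_prod (?A *\<^sub>v v) (?A *\<^sub>v v)"
    by (rule transpose_vec_mult_scalar[OF A v(1) mult_mat_vec_carrier[OF A v(1)]])
  ultimately have "?A *\<^sub>v v = 0\<^sub>v n"
    using self_scalar_prod_zero_real[of "?A *\<^sub>v v"] by simp
  moreover have "distinct (cols ?A)" using xs by simp
  ultimately have "module.lin_dep class_ring (module_vec TYPE(real) n) (set (cols ?A))"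
    using vec_space.lin_depI[OF A v(1) v(2)] by blast
  then show False using li xs by simp
qed

lemma gram_rank:
  fixes xs :: "real vec list"
  assumes xs: "set xs \<subseteq> carrier_vec n" and M: "M \<in> carrier_mat n nc"
    and sub: "set xs \<subseteq> set (cols M)"
    and d: "det (transpose_mat (mat_of_cols n xs) * mat_of_cols n xs) \<noteq> 0"
  shows "length xs \<le> vec_space.rank n M"
proof -
  let ?A = "mat_of_cols n xs"
  let ?m = "length xs"
  let ?G = "transpose_mat ?A * ?A"
  have A: "?A \<in> carrier_mat n ?m" by simp
  have G: "?G \<in> carrier_mat ?m ?m" using A by (intro mult_carrier_mat) auto
  have colA: "col ?A a = xs ! a" if "a < ?m" for a using that xs by (auto intro!: col_mat_of_cols)
  have dist: "distinct xs"
  proof (rule ccontr)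
    assume "\<not> distinct xs"
    then obtain a b where ab: "a \<noteq> b" "a < ?m" "b < ?m" "xs ! a = xs ! b"
      using distinct_conv_nth by blast
    have "col ?G a = col ?G b"
    proof (rule eq_vecI)
      fix i assume "i < dim_vec (col ?G b)"
      then have i: "i < ?m" by simp
      show "col ?G a $ i = col ?G b $ i"
        using ab i by (simp add: gram_entry[OF A] colA[symmetric] col_def)
    qed simp
    then have "det ?G = 0" using det_identical_cols[OF G ab(1-3)] by simp
    then show False using d by simp
  qed
  have li: "\<not> module.lin_dep class_ring (module_vec TYPE(real) n) (set xs)"
  proof
    assume ld: "module.lin_dep class_ring (module_vec TYPE(real) n) (set xs)"
    obtain v where v: "v \<in> carrier_vec ?m" "v \<noteq> 0\<^sub>v ?m" "?A *\<^sub>v v = 0\<^sub>v n"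
      using vec_space.lin_depE[OF A] ld xs dist by auto
    have "?G *\<^sub>v v = transpose_mat ?A *\<^sub>v (?A *\<^sub>v v)"
      using A v(1) by (metis assoc_mult_mat_vec transpose_carrier_mat)
    also have "\<dots> = 0\<^sub>v ?m" using v(3) A by (auto intro!: eq_vecI simp: scalar_prod_right_zero)
    finally have "det ?G = 0" using det_0_iff_vec_prod_zero_field[OF G] v by blast
    then show False using d by simp
  qed
  have "card (set xs) \<le> vec_space.rank n M"
    by (rule vec_space.rank_ge_card_indpt[OF M sub li])
  then show ?thesis using distinct_card[OF dist] by simp
qed


lemma (in vec_space) rank_extract:
  assumes A: "A \<in> carrier_mat n nc" and m: "m \<le> rank A"
  shows "\<exists>xs. distinct xs \<and> length xs = m \<and> set xs \<subseteq> set (cols A) \<and> lin_indpt (set xs)"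
proof -
  obtain S where S: "maximal S (\<lambda>T. T \<subseteq> set (cols A) \<and> lin_indpt T)"
    using maximal_exists[of "(\<lambda>T. T \<subseteq> set (cols A) \<and> lin_indpt T)" "card (set (cols A))" "{}"]
    by (meson List.finite_set card_mono empty_iff empty_subsetI finite_lin_indpt2 rev_finite_subset)
  have rk: "rank A = card S" using rank_card_indpt[OF A S] .
  have Ssub: "S \<subseteq> set (cols A)" and Sli: "lin_indpt S" using S by (auto simp: maximal_def)
  have fS: "finite S" using Ssub finite_subset by blast
  obtain S' where S': "S' \<subseteq> S" "card S' = m" using obtain_subset_with_card_n[of m S] m rk by auto
  have fS': "finite S'" using S'(1) fS finite_subset by blast
  obtain xs where xs: "set xs = S'" "distinct xs" using finite_distinct_list[OF fS'] by blast
  have "lin_indpt S'"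
    using subset_li_is_li[OF Sli S'(1)] .
  then show ?thesis
    using xs S' Ssub distinct_card[OF xs(2)] by (intro exI[of _ xs]) auto
qed

lemma card_tri: "card {(a::nat,b). b < D \<and> a \<le> b} = D * (D + 1) div 2"
proof -
  have "2 * card {(a::nat,b). b < D \<and> a \<le> b} = D * (D + 1)"
  proof (induction D)
    case 0 then show ?case by simp
  next
    case (Suc D)
    have eq: "{(a::nat,b). b < Suc D \<and> a \<le> b} = {(a,b). b < D \<and> a \<le> b} \<union> (\<lambda>a. (a, D)) ` {..D}"
      by auto
    have "card {(a::nat,b). b < Suc D \<and> a \<le> b} = card {(a::nat,b). b < D \<and> a \<le> b} + card ((\<lambda>a. (a, D)) ` {..D})"
      unfolding eq
    proof (rule card_Un_disjoint)
      show "finite {(a::nat,b). b < D \<and> a \<le> b}"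
        by (rule finite_subset[of _ "{..D} \<times> {..D}"]) auto
    qed auto
    also have "card ((\<lambda>a. (a, D)) ` {..D}) = Suc D" by (subst card_image) (auto simp: inj_on_def)
    finally show ?case using Suc by simp
  qed
  then show ?thesis by simp
qed

lemma card_U: "card {k. k < (D::nat)*D \<and> k mod D \<le> k div D} = D * (D + 1) div 2"
proof -
  have "{k. k < (D::nat)*D \<and> k mod D \<le> k div D} = (\<lambda>(a,b). a + D*b) ` {(a::nat,b). b < D \<and> a \<le> b}"
  proof (intro equalityI subsetI)
    fix k assume "k \<in> {k. k < D*D \<and> k mod D \<le> k div D}"
    then have k: "k < D*D" "k mod D \<le> k div D" by auto
    have "k div D < D" using k(1) by (simp add: less_mult_imp_div_less)
    moreover have "k = k mod D + D * (k div D)" by simp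
    ultimately show "k \<in> (\<lambda>(a,b). a + D*b) ` {(a::nat,b). b < D \<and> a \<le> b}"
      using k(2) by (intro image_eqI[of _ _ "(k mod D, k div D)"]) auto
  next
    fix k assume "k \<in> (\<lambda>(a,b). a + D*b) ` {(a::nat,b). b < D \<and> a \<le> b}"
    then obtain a b where ab: "k = a + D*b" "b < D" "a \<le> b" by auto
    then have aD: "a < D" by simp
    have "a + D*b < D + D*b" using aD by simp
    also have "\<dots> = D * Suc b" by simp
    also have "\<dots> \<le> D * D" using ab(2) by (intro mult_le_mono2) simp
    finally have "k < D*D" using ab by simp
    moreover have "k mod D = a" "k div D = b" using ab aD by auto
    ultimately show "k \<in> {k. k < D*D \<and> k mod D \<le> k div D}" using ab by simp
  qed
  moreover have "inj_on (\<lambda>(a,b). a + D*b) {(a::nat,b). b < D \<and> a \<le> b}"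
  proof (rule inj_onI, clarify)
    fix a b a' b' assume h: "b < D" "a \<le> b" "b' < D" "a' \<le> b'" "a + D*b = a' + D*b'"
    have aa: "a < D" "a' < D" using h by auto
    have "(a + D*b) mod D = a" "(a' + D*b') mod D = a'" "(a + D*b) div D = b" "(a' + D*b') div D = b'"
      using aa by auto
    then show "a = a' \<and> b = b'" using h(5) by metis
  qed
  ultimately show ?thesis using card_tri[of D] by (simp add: card_image)
qed

lemma idx_lt: "a < D \<Longrightarrow> b < D \<Longrightarrow> a + D*b < D*(D::nat)"
proof -
  assume h: "a < D" "b < D"
  have "a + D*b < D + D*b" using h by simp
  also have "\<dots> = D * Suc b" by simp
  also have "\<dots> \<le> D * D" using h(2) by (intro mult_le_mono2) simp
  finally show ?thesis .
qed

lemma sym_rank: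
  fixes M :: "real mat"
  assumes M: "M \<in> carrier_mat (D*D) nc"
   and sym: "\<And>j a b. j < nc \<Longrightarrow> a < D \<Longrightarrow> b < D \<Longrightarrow> M $$ (a + D*b, j) = M $$ (b + D*a, j)"
  shows "vec_space.rank (D*D) M \<le> D*(D+1) div 2"
proof (rule ccontr)
  define r where "r = D*(D+1) div 2"
  define n where "n = D*D"
  define U where "U = {k. k < D*D \<and> k mod D \<le> k div D}"
  have cU: "card U = r" unfolding U_def r_def by (rule card_U)
  have fU: "finite U" unfolding U_def by auto
  assume "\<not> vec_space.rank (D*D) M \<le> D*(D+1) div 2"
  then have "Suc r \<le> vec_space.rank n M" unfolding r_def n_def by simp
  then obtain xs where xs: "distinct xs" "length xs = Suc r" "set xs \<subseteq> set (cols M)"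
     "\<not> module.lin_dep class_ring (module_vec TYPE(real) n) (set xs)"
    using vec_space.rank_extract[of M n nc "Suc r"] M unfolding n_def by blast
  let ?m = "Suc r"
  let ?A = "mat_of_cols n xs"
  have xsc: "set xs \<subseteq> carrier_vec n"
    by (rule subset_trans[OF xs(3)]) (use cols_dim[of M] carrier_matD(1)[OF M] n_def in simp)
  have A: "?A \<in> carrier_mat n ?m" by (metis mat_of_cols_carrier(1) xs(2))
  have Aent: "?A $$ (k, j) = xs ! j $ k" if "k < n" "j < ?m" for k j
    using that xs(2) by (simp add: mat_of_cols_def)
  have Asym: "?A $$ (a + D*b, j) = ?A $$ (b + D*a, j)" if "j < ?m" "a < D" "b < D" for j a b
  proof -
    have "xs ! j \<in> set (cols M)" using xs(2,3) that(1) by auto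
    then obtain c where c: "c < nc" "xs ! j = col M c"
      using M by (metis cols_length cols_nth carrier_matD(2) in_set_conv_nth)
    have lt: "a + D*b < n" "b + D*a < n" using idx_lt that unfolding n_def by auto
    have dM: "dim_row M = n" "dim_col M = nc" using M unfolding n_def by auto
    have e1: "?A $$ (a + D*b, j) = M $$ (a + D*b, c)"
      using Aent[OF lt(1) that(1)] c lt(1) dM by simp
    have e2: "?A $$ (b + D*a, j) = M $$ (b + D*a, c)"
      using Aent[OF lt(2) that(1)] c lt(2) dM by simp
    show ?thesis using e1 e2 sym[OF c(1) that(2,3)] by simp
  qed
  define B where "B = mat ?m ?m (\<lambda>(a,j). if a < r then ?A $$ (pick U a, j) else 0)"
  have B: "B \<in> carrier_mat ?m ?m" unfolding B_def by simp
  have "det B = 0"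
  proof -
    have zero: "(\<Prod>i = 0..<?m. B $$ (i, p i)) = 0" if "p permutes {0..<?m}" for p
    proof (rule prod_zero)
      have "p r < ?m" using permutes_in_image[OF that, of r] by simp
      then show "\<exists>a\<in>{0..<?m}. B $$ (a, p a) = 0" by (intro bexI[of _ r]) (auto simp: B_def)
    qed simp
    have "det B = (\<Sum>p\<in>{p. p permutes {0..<?m}}. signof p * (\<Prod>i = 0..<?m. B $$ (i, p i)))"
      unfolding det_def carrier_matD[OF B] if_P[OF refl] by (rule refl)
    also have "\<dots> = 0"
    proof (rule sum.neutral, rule ballI)
      fix p assume "p \<in> {p. p permutes {0..<?m}}"
      then show "signof p * (\<Prod>i = 0..<?m. B $$ (i, p i)) = 0"
        by (metis zero mem_Collect_eq mult_zero_right)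
    qed
    finally show ?thesis .
  qed
  then obtain v where v: "v \<in> carrier_vec ?m" "v \<noteq> 0\<^sub>v ?m" "B *\<^sub>v v = 0\<^sub>v ?m"
    using det_0_iff_vec_prod_zero_field[OF B] by blast
  have Avk: "(?A *\<^sub>v v) $ k = (\<Sum>j<?m. ?A $$ (k, j) * v $ j)" if "k < n" for k
    using that A v(1) by (auto simp: scalar_prod_def lessThan_atLeast0 intro!: sum.cong)
  have U0: "(?A *\<^sub>v v) $ k = 0" if "k \<in> U" for k
  proof -
    define a where "a = card {u\<in>U. u < k}"
    have "{u\<in>U. u < k} \<subset> U" using that by auto
    then have ar: "a < r" unfolding a_def using cU fU by (metis psubset_card_mono)
    have pk: "pick U a = k" unfolding a_def using pick_card_in_set[OF that] .
    have kn: "k < n" using that unfolding U_def n_def by simp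
    have "(B *\<^sub>v v) $ a = (\<Sum>j<?m. B $$ (a, j) * v $ j)"
      using ar B v(1) by (auto simp: scalar_prod_def lessThan_atLeast0 intro!: sum.cong)
    also have "\<dots> = (\<Sum>j<?m. ?A $$ (k, j) * v $ j)"
      using ar pk by (auto simp: B_def intro!: sum.cong)
    finally show ?thesis using Avk[OF kn] v(3) ar by simp
  qed
  have "?A *\<^sub>v v = 0\<^sub>v n"
  proof (rule eq_vecI)
    fix k assume "k < dim_vec (0\<^sub>v n)"
    then have kn: "k < n" by simp
    show "(?A *\<^sub>v v) $ k = 0\<^sub>v n $ k"
    proof (cases "k \<in> U")
      case True then show ?thesis using U0[OF True] kn by (metis index_zero_vec(1))
    next
      case False
      define a where "a = k mod D"
      define b where "b = k div D"
      have D0: "D > 0" using kn unfolding n_def by (cases D) auto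
      have aD: "a < D" "b < D" using kn D0 unfolding a_def b_def n_def
        by (auto simp: less_mult_imp_div_less)
      have k: "k = a + D*b" unfolding a_def b_def by simp
      have "b < a" using False kn unfolding U_def a_def b_def n_def by auto
      then have "b + D*a \<in> U" using idx_lt[OF aD(2) aD(1)] aD unfolding U_def by auto
      moreover have "(?A *\<^sub>v v) $ k = (?A *\<^sub>v v) $ (b + D*a)"
        using Avk[OF kn] Avk[of "b + D*a"] idx_lt[OF aD(2) aD(1)] Asym[OF _ aD] k
        unfolding n_def by (auto intro!: sum.cong)
      ultimately show ?thesis using U0 kn by (metis index_zero_vec(1))
    qed
  qed simp
  then have "module.lin_dep class_ring (module_vec TYPE(real) n) (set (cols ?A))"
    using vec_space.lin_depI[OF A v(1) v(2)] xs xsc by simp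
  then show False using xs xsc by simp
qed



lemma Dmat_entry:
  assumes "a < W" "b < VK"
  shows "Dmat D W VK P $$ (a, b) = (\<Sum>l<D. P (l, a) * P (l, W + b))"
  using assms by (auto simp: Dmat_def Pst_def Pm_def scalar_prod_def lessThan_atLeast0 intro!: sum.cong)

lemma polyfun_Dmat:
  assumes "a < W" "b < VK"
  shows "polyfun ({..<D} \<times> {..<W + VK}) (\<lambda>P. Dmat D W VK P $$ (a, b))"
  unfolding Dmat_entry[OF assms] using assms
  by (intro polyfun_sum pf_mult pf_var) auto

lemma Nmat_dims: "dim_row (Nmat s D Dm ab) = D" "dim_col (Nmat s D Dm ab) = D"
  by (cases s; simp add: Nmat_def)+

lemma Nmat_entry:
  assumes "r < D" "c < D"
  shows "Nmat s D Dm ab $$ (r, c) = (case s of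
     St \<Rightarrow> (1/2) * (Dm $$ (fst ab, r) * Dm $$ (snd ab, c) + Dm $$ (snd ab, r) * Dm $$ (fst ab, c))
   | Mm \<Rightarrow> (1/2) * (Dm $$ (r, fst ab) * Dm $$ (c, snd ab) + Dm $$ (r, snd ab) * Dm $$ (c, fst ab)))"
  using assms by (cases s) (auto simp: Nmat_def)

lemma Nmat_sym:
  assumes "r < D" "c < D"
  shows "Nmat s D Dm ab $$ (r, c) = Nmat s D Dm ab $$ (c, r)"
  using assms by (cases s) (auto simp: Nmat_entry algebra_simps)

lemma polyfun_Nmat:
  assumes "r < D" "c < D"
    and th: "(case s of St \<Rightarrow> fst ab < W \<and> snd ab < W | Mm \<Rightarrow> fst ab < VK \<and> snd ab < VK)"
    and Dc: "(case s of St \<Rightarrow> D \<le> VK | Mm \<Rightarrow> D \<le> W)"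
  shows "polyfun ({..<D} \<times> {..<W + VK}) (\<lambda>P. Nmat s D (Dmat D W VK P) ab $$ (r, c))"
proof (cases s)
  case St
  then have h: "fst ab < W" "snd ab < W" "r < VK" "c < VK" using th Dc assms by auto
  show ?thesis unfolding Nmat_entry[OF assms(1,2)] St sharp.case
    by (intro pf_mult pf_add pf_const polyfun_Dmat h)
next
  case Mm
  then have h: "fst ab < VK" "snd ab < VK" "r < W" "c < W" using th Dc assms by auto
  show ?thesis unfolding Nmat_entry[OF assms(1,2)] Mm sharp.case
    by (intro pf_mult pf_add pf_const polyfun_Dmat h)
qed

lemma vecm_Nmat:
  assumes "k < D * D"
  shows "vecm (Nmat s D Dm ab) $ k = Nmat s D Dm ab $$ (k mod D, k div D)"
  using assms by (simp add: vecm_def Nmat_dims)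

lemma vecm_Nmat_carrier: "vecm (Nmat s D Dm ab) \<in> carrier_vec (D * D)"
  by (simp add: vecm_def Nmat_dims)


lemma main_lemma:
  fixes D W VK J :: nat and s :: sharp and theta :: "nat \<Rightarrow> nat \<times> nat"
  assumes D0: "D > 0"
    and th: "\<forall>j<J. (case s of
            St \<Rightarrow> fst (theta j) < W \<and> snd (theta j) < W
          | Mm \<Rightarrow> fst (theta j) < VK \<and> snd (theta j) < VK)"
    and Dc: "(case s of St \<Rightarrow> D \<le> VK | Mm \<Rightarrow> D \<le> W)"
  shows "(\<forall>P \<in> PiE ({..<D} \<times> {..<W + VK}) (\<lambda>_. UNIV).
            mrank (Mmat s D W VK J theta P) < D * (D + 1) div 2)
       \<or> (AE P in PiM ({..<D} \<times> {..<W + VK}) (\<lambda>_. lborel).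
            mrank (Mmat s D W VK J theta P) = D * (D + 1) div 2)"
proof -
  define Idx where "Idx = {..<D} \<times> {..<W + VK}"
  define r where "r = D * (D + 1) div 2"
  define n where "n = D * D"
  define colv where "colv P j = vecm (Nmat s D (Dmat D W VK P) (theta j))" for P j
  have Mdef: "Mmat s D W VK J theta P = mat_of_cols n (map (colv P) [0..<J])" for P
    unfolding Mmat_def colv_def n_def ..
  have colc: "colv P j \<in> carrier_vec n" for P j
    unfolding colv_def n_def by (rule vecm_Nmat_carrier)
  have colent: "colv P j $ k = Nmat s D (Dmat D W VK P) (theta j) $$ (k mod D, k div D)" if "k < n" for P j k
    unfolding colv_def using that vecm_Nmat unfolding n_def by blast
  have Mc: "Mmat s D W VK J theta P \<in> carrier_mat n J" for P
    unfolding Mdef by (metis length_map length_upt minus_nat.diff_0 mat_of_cols_carrier(1))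
  have mr: "mrank (Mmat s D W VK J theta P) = vec_space.rank n (Mmat s D W VK J theta P)" for P
    unfolding mrank_def using Mc[of P] by simp
  have colsM: "set (cols (Mmat s D W VK J theta P)) = colv P ` {..<J}" for P
  proof -
    have "set (map (colv P) [0..<J]) \<subseteq> carrier_vec n" using colc by auto
    then show ?thesis unfolding Mdef by (auto simp: lessThan_atLeast0)
  qed
  have upper: "vec_space.rank n (Mmat s D W VK J theta P) \<le> r" for P
    unfolding n_def r_def
  proof (rule sym_rank)
    show "Mmat s D W VK J theta P \<in> carrier_mat (D * D) J" using Mc[of P] unfolding n_def .
    fix j a b assume h: "j < J" "a < D" "b < D"
    have ent: "Mmat s D W VK J theta P $$ (k, j) = colv P j $ k" if "k < n" for k
      using that h(1) unfolding Mdef by (simp add: mat_of_cols_def)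
    have l1: "a + D * b < n" "b + D * a < n" using idx_lt h unfolding n_def by auto
    show "Mmat s D W VK J theta P $$ (a + D * b, j) = Mmat s D W VK J theta P $$ (b + D * a, j)"
      using l1 h by (simp add: ent colent Nmat_sym[of a D b])
  qed
  show ?thesis
  proof (cases "\<forall>P \<in> PiE Idx (\<lambda>_. UNIV). mrank (Mmat s D W VK J theta P) < r")
    case True then show ?thesis unfolding Idx_def r_def by blast
  next
    case False
    then obtain P0 where P0: "P0 \<in> PiE Idx (\<lambda>_. UNIV)" "r \<le> vec_space.rank n (Mmat s D W VK J theta P0)"
      by (auto simp: not_less mr)
    obtain xs where xs: "distinct xs" "length xs = r" "set xs \<subseteq> set (cols (Mmat s D W VK J theta P0))"
      "\<not> module.lin_dep class_ring (module_vec TYPE(real) n) (set xs)"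
      using vec_space.rank_extract[OF Mc P0(2)] by blast
    define js where "js = map (\<lambda>x. SOME j. j < J \<and> x = colv P0 j) xs"
    have jsx: "(SOME j. j < J \<and> x = colv P0 j) < J \<and> x = colv P0 (SOME j. j < J \<and> x = colv P0 j)"
      if "x \<in> set xs" for x
    proof (rule someI_ex)
      show "\<exists>j. j < J \<and> x = colv P0 j" using that xs(3) colsM[of P0] by auto
    qed
    have jsJ: "\<forall>j\<in>set js. j < J" unfolding js_def using jsx by auto
    have jsxs: "map (colv P0) js = xs" unfolding js_def using jsx by (auto intro: map_idI)
    have ljs: "length js = r" using xs(2) unfolding js_def by simp
    define A where "A P = mat_of_cols n (map (colv P) js)" for P
    define g where "g P = det (transpose_mat (A P) * A P)" for P
    have Ac: "A P \<in> carrier_mat n r" for P unfolding A_def using ljs mat_of_cols_carrier(1)[of n "map (colv P) js"] by simp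
    have g0: "g P0 \<noteq> 0"
      unfolding g_def A_def jsxs
      by (rule gram_indep) (use xs colc jsxs in auto)
    have Aent: "A P $$ (k, a) = colv P (js ! a) $ k" if "k < n" "a < r" for P k a
      using that ljs unfolding A_def by (simp add: mat_of_cols_def)
    have pcol: "polyfun Idx (\<lambda>P. colv P j $ k)" if "j < J" "k < n" for j k
    proof -
      have "k mod D < D" "k div D < D" using that D0 unfolding n_def by (auto simp: less_mult_imp_div_less)
      then show ?thesis unfolding colent[OF that(2)] Idx_def
        by (intro polyfun_Nmat) (use th that(1) Dc in auto)
    qed
    have gform: "g P = (\<Sum>p\<in>{p. p permutes {0..<r}}. signof p *
        (\<Prod>i = 0..<r. (\<Sum>k<n. colv P (js ! i) $ k * colv P (js ! p i) $ k)))" for P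
    proof -
      have G: "transpose_mat (A P) * A P \<in> carrier_mat r r" using Ac[of P] by (intro mult_carrier_mat) auto
      have "g P = (\<Sum>p\<in>{p. p permutes {0..<r}}. signof p *
        (\<Prod>i = 0..<r. (transpose_mat (A P) * A P) $$ (i, p i)))"
        unfolding g_def det_def carrier_matD[OF G] if_P[OF refl] by (rule refl)
      also have "\<dots> = (\<Sum>p\<in>{p. p permutes {0..<r}}. signof p *
        (\<Prod>i = 0..<r. (\<Sum>k<n. colv P (js ! i) $ k * colv P (js ! p i) $ k)))"
      proof (rule sum.cong[OF refl], rule arg_cong[where f = "\<lambda>x. _ * x"], rule prod.cong[OF refl])
        fix p i assume p: "p \<in> {p. p permutes {0..<r}}" and i: "i \<in> {0..<r}"
        have pi: "p i < r" using permutes_in_image[of p "{0..<r}" i] p i by auto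
        show "(transpose_mat (A P) * A P) $$ (i, p i) = (\<Sum>k<n. colv P (js ! i) $ k * colv P (js ! p i) $ k)"
          using gram_entry[OF Ac, of i "p i"] i pi by (simp add: Aent)
      qed
      finally show ?thesis .
    qed
    have "polyfun Idx g"
      unfolding gform
    proof (intro polyfun_sum pf_mult pf_const polyfun_prod)
      fix p i k assume p: "p \<in> {p. p permutes {0..<r}}" and i: "i \<in> {0..<r}" and k: "k \<in> {..<n}"
      have pi: "p i < r" using permutes_in_image[of p "{0..<r}" i] p i by auto
      have "js ! i < J" "js ! p i < J" using jsJ ljs i pi by auto
      then show "polyfun Idx (\<lambda>P. colv P (js ! i) $ k)" "polyfun Idx (\<lambda>P. colv P (js ! p i) $ k)"
        using pcol k by auto
    qed (auto simp: finite_permutations)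
    moreover have "finite Idx" unfolding Idx_def by auto
    ultimately have AE: "AE P in PiM Idx (\<lambda>_. lborel). g P \<noteq> 0"
      using polyfun_AE_nonzero P0(1) g0 by blast
    have "AE P in PiM Idx (\<lambda>_. lborel). mrank (Mmat s D W VK J theta P) = r"
    proof (rule AE_mp[OF AE], rule AE_I2, rule impI)
      fix P assume gP: "g P \<noteq> 0"
      have "length (map (colv P) js) \<le> vec_space.rank n (Mmat s D W VK J theta P)"
      proof (rule gram_rank[OF _ Mc])
        show "set (map (colv P) js) \<subseteq> carrier_vec n" using colc by auto
        show "set (map (colv P) js) \<subseteq> set (cols (Mmat s D W VK J theta P))"
          unfolding colsM using jsJ by auto
        show "det (transpose_mat (mat_of_cols n (map (colv P) js)) * mat_of_cols n (map (colv P) js)) \<noteq> 0"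
          using gP unfolding g_def A_def .
      qed
      then show "mrank (Mmat s D W VK J theta P) = r" using upper[of P] ljs mr[of P] by simp
    qed
    then show ?thesis unfolding Idx_def r_def by blast
  qed
qed


theorem theorem3:
  fixes D W V K J :: nat and s :: sharp and theta :: "nat \<Rightarrow> nat \<times> nat"
  assumes "D > 0" and "W > 0" and "V > 0" and "K > 0"
    and "\<forall>j<J. (case s of
            St \<Rightarrow> fst (theta j) < W \<and> snd (theta j) < W
          | Mm \<Rightarrow> fst (theta j) < V * K \<and> snd (theta j) < V * K)"
    and "(case s of St \<Rightarrow> D \<le> V * K | Mm \<Rightarrow> D \<le> W)"
  shows "(\<forall>P \<in> PiE ({..<D} \<times> {..<W + V * K}) (\<lambda>_. UNIV).
            mrank (Mmat s D W (V * K) J theta P) < D * (D + 1) div 2)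
       \<or> (AE P in PiM ({..<D} \<times> {..<W + V * K}) (\<lambda>_. lborel).
            mrank (Mmat s D W (V * K) J theta P) = D * (D + 1) div 2)"
  using main_lemma[OF assms(1) assms(5) assms(6)] .

end
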